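(* Let $a>1$, $k\in\mathbb{N}$, $C_j(n,a)=\binom{n}{j}\left(\frac{1+a}{2}\right)^{n-j}\left(\frac{1-a}{2}\right)^j$, $b_j=-\frac{i}{\sqrt2}(1-\frac{2j}{n})$, $b=-\frac{ia}{\sqrt2}$ and $e_k(z)=z^k/\sqrt{k!}$. Then for every $z\in\mathbb{C}$, $$\lim_{n\to\infty}\sum_{j=0}^nC_j(n,a)\mathcal{W}_{b_j}[e_k](z)=\mathcal{W}_b[e_k](z).$$
   Context: For $c\in\mathbb{C}$ the Weyl operator on the Fock space is $\mathcal{W}_cf(z)=f(z-c)e^{z\bar c-|c|^2/2}$. *)

theory Defs
  imports "HOL-Analysis.Analysis"
begin

definition weyl :: "complex \<Rightarrow> (complex \<Rightarrow> complex) \<Rightarrow> complex \<Rightarrow> complex" where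
  "weyl c f z = f (z - c) * exp (z * cnj c - complex_of_real ((cmod c)^2 / 2))"

definition ek :: "nat \<Rightarrow> complex \<Rightarrow> complex" where
  "ek k z = z ^ k / complex_of_real (sqrt (fact k))"

definition Cco :: "nat \<Rightarrow> nat \<Rightarrow> real \<Rightarrow> real" where
  "Cco j n a = real (n choose j) * ((1 + a) / 2) ^ (n - j) * ((1 - a) / 2) ^ j"

definition bj :: "nat \<Rightarrow> nat \<Rightarrow> complex" where
  "bj n j = - (\<i> / complex_of_real (sqrt 2)) * complex_of_real (1 - 2 * real j / real n)"

definition bb :: "real \<Rightarrow> complex" where
  "bb a = - (\<i> * complex_of_real a / complex_of_real (sqrt 2))"

end

theory Submission
  imports Defs "HOL-Complex_Analysis.Complex_Analysis"
begin


lemma rec_gen: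
  fixes p q :: real and h :: "real \<Rightarrow> real"
  shows "(\<Sum>j=0..Suc n. real (Suc n choose j) * p^(Suc n - j) * q^j * h (real (Suc n) - 2 * real j))
       = (\<Sum>j=0..n. real (n choose j) * p^(n - j) * q^j * (p * h (real n - 2 * real j + 1) + q * h (real n - 2 * real j - 1)))"
proof -
  define A where "A = (\<Sum>j=0..n. real (n choose j) * p^(Suc n - j) * q^j * h (real (Suc n) - 2 * real j))"
  define B where "B = (\<Sum>j=0..n. real (n choose j) * p^(n - j) * q^(Suc j) * h (real n - 2 * real j - 1))"
  have R: "(\<Sum>j=0..n. real (n choose j) * p^(n - j) * q^j * (p * h (real n - 2 * real j + 1) + q * h (real n - 2 * real j - 1))) = A + B"
    unfolding A_def B_def sum.distrib[symmetric]
    apply (rule sum.cong, simp)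
    apply (simp add: algebra_simps Suc_diff_le)
    done
  have L1: "(\<Sum>j=0..Suc n. real (Suc n choose j) * p^(Suc n - j) * q^j * h (real (Suc n) - 2 * real j))
     = p^(Suc n) * h (real (Suc n)) + (\<Sum>j=0..n. real (Suc n choose Suc j) * p^(n - j) * q^(Suc j) * h (real n - 2 * real j - 1))"
    by (subst sum.atLeast0_atMost_Suc_shift) (simp add: algebra_simps)
  also have "\<dots> = p^(Suc n) * h (real (Suc n)) + (\<Sum>j=0..n. real (n choose Suc j) * p^(n - j) * q^(Suc j) * h (real n - 2 * real j - 1)) + B"
    unfolding B_def by (simp add: sum.distrib algebra_simps)
  also have "p^(Suc n) * h (real (Suc n)) + (\<Sum>j=0..n. real (n choose Suc j) * p^(n - j) * q^(Suc j) * h (real n - 2 * real j - 1))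
     = (\<Sum>j=0..Suc n. real (n choose j) * p^(Suc n - j) * q^j * h (real (Suc n) - 2 * real j))"
    by (subst sum.atLeast0_atMost_Suc_shift) (simp add: algebra_simps)
  also have "\<dots> = A" unfolding A_def by (subst sum.atLeast0_atMost_Suc) simp
  finally show ?thesis using R by simp
qed

definition uu :: "real \<Rightarrow> real \<Rightarrow> nat \<Rightarrow> nat \<Rightarrow> real" where
  "uu p q n m = (\<Sum>j=0..n. real (n choose j) * p^(n - j) * q^j * (real n - 2 * real j)^m)"

lemma binom_pm:
  fixes y p q :: real
  shows "p * (y + 1)^m + q * (y - 1)^m = (\<Sum>l\<le>m. real (m choose l) * (p + q * (-1)^l) * y^(m - l))"
proof -
  have "(y + 1)^m = (\<Sum>l\<le>m. real (m choose l) * y^(m - l))"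
    using binomial_ring[of 1 y m] by (simp add: add.commute)
  moreover have "(y - 1)^m = (\<Sum>l\<le>m. real (m choose l) * (-1)^l * y^(m - l))"
    using binomial_ring[of "-1" y m] by (simp add: add.commute)
  ultimately show ?thesis
    by (simp add: sum_distrib_left sum.distrib[symmetric] algebra_simps)
qed

lemma uu_rec:
  "uu p q (Suc n) m = (\<Sum>l\<le>m. real (m choose l) * (p + q * (-1)^l) * uu p q n (m - l))"
proof -
  have "uu p q (Suc n) m = (\<Sum>j=0..n. real (n choose j) * p^(n - j) * q^j *
      (p * (real n - 2 * real j + 1)^m + q * (real n - 2 * real j - 1)^m))"
    unfolding uu_def by (rule rec_gen)
  also have "\<dots> = (\<Sum>j=0..n. real (n choose j) * p^(n - j) * q^j *
      (\<Sum>l\<le>m. real (m choose l) * (p + q * (-1)^l) * (real n - 2 * real j)^(m - l)))"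
    by (simp add: binom_pm)
  also have "\<dots> = (\<Sum>l\<le>m. real (m choose l) * (p + q * (-1)^l) * uu p q n (m - l))"
    unfolding uu_def sum_distrib_left
    by (subst sum.swap) (simp add: algebra_simps)
  finally show ?thesis .
qed

lemma e_bound:
  fixes a :: real assumes "a > 1"
  shows "\<bar>(1 + a) / 2 + (1 - a) / 2 * (-1)^l\<bar> \<le> a^l"
proof (cases "even l")
  case True
  have "(1 + a) / 2 + (1 - a) / 2 = (1::real)" by (simp add: field_simps)
  then show ?thesis using assms True by (simp add: one_le_power)
next
  case False
  then have "l \<ge> 1" by (cases l) auto
  then have "a^1 \<le> a^l" using assms by (intro power_increasing) auto
  moreover have "(1 + a) / 2 - (1 - a) / 2 = a" by (simp add: field_simps)
  ultimately show ?thesis using False assms by simp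
qed

lemma uu_bound:
  fixes a :: real assumes "a > 1"
  shows "\<bar>uu ((1 + a) / 2) ((1 - a) / 2) n m\<bar> \<le> (real n * a)^m"
proof (induction n arbitrary: m)
  case 0
  then show ?case by (simp add: uu_def)
next
  case (Suc n)
  let ?p = "(1 + a) / 2" and ?q = "(1 - a) / 2"
  have "\<bar>uu ?p ?q (Suc n) m\<bar> \<le> (\<Sum>l\<le>m. \<bar>real (m choose l) * (?p + ?q * (-1)^l) * uu ?p ?q n (m - l)\<bar>)"
    unfolding uu_rec by (rule sum_abs)
  also have "\<dots> \<le> (\<Sum>l\<le>m. real (m choose l) * a^l * (real n * a)^(m - l))"
  proof (rule sum_mono)
    fix l assume "l \<in> {..m}"
    have "\<bar>real (m choose l) * (?p + ?q * (-1)^l) * uu ?p ?q n (m - l)\<bar>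
        = real (m choose l) * \<bar>?p + ?q * (-1)^l\<bar> * \<bar>uu ?p ?q n (m - l)\<bar>"
      by (simp add: abs_mult)
    also have "\<dots> \<le> real (m choose l) * a^l * (real n * a)^(m - l)"
      using e_bound[OF assms, of l] Suc.IH[of "m - l"] assms
      by (intro mult_mono mult_left_mono) auto
    finally show "\<bar>real (m choose l) * (?p + ?q * (-1)^l) * uu ?p ?q n (m - l)\<bar>
        \<le> real (m choose l) * a^l * (real n * a)^(m - l)" .
  qed
  also have "\<dots> = (a + real n * a)^m" by (simp add: binomial_ring)
  also have "\<dots> = (real (Suc n) * a)^m" by (simp add: algebra_simps)
  finally show ?case .
qed

lemma uu0:
  fixes a :: real
  shows "uu ((1 + a) / 2) ((1 - a) / 2) n 0 = 1"
  by (induction n) (simp_all add: uu_rec field_simps, simp add: uu_def)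

lemma uu1:
  fixes a :: real
  shows "uu ((1 + a) / 2) ((1 - a) / 2) n 1 = real n * a"
  by (induction n) (simp_all add: uu_rec uu0 field_simps, simp add: uu_def)

abbreviation UU :: "real \<Rightarrow> nat \<Rightarrow> nat \<Rightarrow> real" where
  "UU a \<equiv> uu ((1 + a) / 2) ((1 - a) / 2)"

abbreviation ee :: "real \<Rightarrow> nat \<Rightarrow> real" where
  "ee a l \<equiv> (1 + a) / 2 + (1 - a) / 2 * (-1)^l"

lemma uu_err:
  fixes a :: real assumes a: "a > 1"
  shows "\<exists>K\<ge>0. \<forall>n. \<bar>UU a n (Suc m) - (real n * a)^(Suc m)\<bar> \<le> K * (real n + 1)^m"
proof (induction m)
  case 0
  show ?case by (intro exI[of _ 0]) (simp add: uu1[unfolded One_nat_def])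
next
  case (Suc m)
  then obtain K where K0: "K \<ge> 0" and K: "\<And>n. \<bar>UU a n (Suc m) - (real n * a)^(Suc m)\<bar> \<le> K * (real n + 1)^m"
    by blast
  define M where "M = Suc (Suc m)"
  define B where "B = real M * a * K + 2 * 2^M * a^M"
  have B0: "B \<ge> 0" unfolding B_def using a K0 by simp
  have e0: "ee a 0 = 1" by (simp add: field_simps)
  have e1: "ee a 1 = a" by (simp add: field_simps)
  have e0': "(1 + a) / 2 + (1 - a) / 2 = (1::real)" by (simp add: field_simps)
  have D: "UU a (Suc n) M - (real (Suc n) * a)^M = UU a n M - (real n * a)^M +
     (\<Sum>i\<le>Suc m. real (M choose Suc i) * (ee a (Suc i) * UU a n (M - Suc i) - a^(Suc i) * (real n * a)^(M - Suc i)))"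
    for n
  proof -
    have "(real (Suc n) * a)^M = (a + real n * a)^M" by (simp add: algebra_simps)
    also have "\<dots> = (\<Sum>l\<le>M. real (M choose l) * a^l * (real n * a)^(M - l))"
      by (simp add: binomial_ring)
    finally have bin: "(real (Suc n) * a)^M = (\<Sum>l\<le>M. real (M choose l) * a^l * (real n * a)^(M - l))" .
    have "UU a (Suc n) M - (real (Suc n) * a)^M =
       (\<Sum>l\<le>M. real (M choose l) * (ee a l * UU a n (M - l) - a^l * (real n * a)^(M - l)))"
      unfolding uu_rec bin sum_subtractf[symmetric] by (simp add: algebra_simps)
    also have "\<dots> = UU a n M - (real n * a)^M +
     (\<Sum>i\<le>Suc m. real (M choose Suc i) * (ee a (Suc i) * UU a n (M - Suc i) - a^(Suc i) * (real n * a)^(M - Suc i)))"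
      unfolding M_def by (subst sum.atMost_Suc_shift) (simp add: e0')
    finally show ?thesis .
  qed
  have Dterm: "\<bar>real (M choose Suc i) * (ee a (Suc i) * UU a n (M - Suc i) - a^(Suc i) * (real n * a)^(M - Suc i))\<bar>
      \<le> B * (real n + 1)^m" if i: "i \<le> Suc m" for i n
  proof (cases i)
    case 0
    have "\<bar>real (M choose Suc i) * (ee a (Suc i) * UU a n (M - Suc i) - a^(Suc i) * (real n * a)^(M - Suc i))\<bar>
        = real M * a * \<bar>UU a n (Suc m) - (real n * a)^(Suc m)\<bar>"
    proof -
      have "real (M choose Suc i) * (ee a (Suc i) * UU a n (M - Suc i) - a^(Suc i) * (real n * a)^(M - Suc i))
          = real M * a * (UU a n (Suc m) - (real n * a)^(Suc m))"
        using 0 e1 unfolding M_def by (simp add: algebra_simps)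
      then show ?thesis using a by (simp add: abs_mult)
    qed
    also have "\<dots> \<le> real M * a * (K * (real n + 1)^m)"
      using K[of n] a by (intro mult_left_mono) auto
    also have "\<dots> \<le> B * (real n + 1)^m"
    proof -
      have "0 \<le> 2 * 2^M * a^M * (real n + 1)^m" using a by simp
      then show ?thesis unfolding B_def by (simp add: algebra_simps)
    qed
    finally show ?thesis .
  next
    case (Suc i')
    have pw: "a^(Suc i) * (real n * a)^(M - Suc i) = a^M * real n^(M - Suc i)"
    proof -
      have "a^(Suc i) * (real n * a)^(M - Suc i) = real n^(M - Suc i) * a^(Suc i + (M - Suc i))"
        by (simp add: power_mult_distrib power_add)
      also have "Suc i + (M - Suc i) = M" using i unfolding M_def by simp
      finally show ?thesis by simp
    qed
    have nb: "real n^(M - Suc i) \<le> (real n + 1)^m"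
    proof -
      have "real n^(M - Suc i) \<le> (real n + 1)^(M - Suc i)" by (intro power_mono) auto
      also have "\<dots> \<le> (real n + 1)^m" using Suc i unfolding M_def by (intro power_increasing) auto
      finally show ?thesis .
    qed
    have cb: "real (M choose Suc i) \<le> 2^M"
      using binomial_le_pow2[of M "Suc i"] by (metis of_nat_le_iff of_nat_numeral of_nat_power)
    have "\<bar>ee a (Suc i) * UU a n (M - Suc i) - a^(Suc i) * (real n * a)^(M - Suc i)\<bar>
        \<le> \<bar>ee a (Suc i)\<bar> * \<bar>UU a n (M - Suc i)\<bar> + a^(Suc i) * (real n * a)^(M - Suc i)"
      using a by (simp add: abs_mult abs_triangle_ineq4 order_trans[OF abs_triangle_ineq4])
    also have "\<dots> \<le> a^(Suc i) * (real n * a)^(M - Suc i) + a^(Suc i) * (real n * a)^(M - Suc i)"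
      using e_bound[OF a, of "Suc i"] uu_bound[OF a, of n "M - Suc i"] a
      by (intro add_mono mult_mono) auto
    also have "\<dots> = 2 * (a^M * real n^(M - Suc i))" using pw by simp
    also have "\<dots> \<le> 2 * (a^M * (real n + 1)^m)"
      using nb a by (intro mult_left_mono) auto
    finally have t: "\<bar>ee a (Suc i) * UU a n (M - Suc i) - a^(Suc i) * (real n * a)^(M - Suc i)\<bar>
        \<le> 2 * (a^M * (real n + 1)^m)" .
    have "\<bar>real (M choose Suc i) * (ee a (Suc i) * UU a n (M - Suc i) - a^(Suc i) * (real n * a)^(M - Suc i))\<bar>
        \<le> 2^M * (2 * (a^M * (real n + 1)^m))"
      unfolding abs_mult using cb t by (intro mult_mono) auto
    also have "\<dots> \<le> B * (real n + 1)^m"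
      unfolding B_def using a K0 by (simp add: algebra_simps)
    finally show ?thesis .
  qed
  have Dbound: "\<bar>UU a (Suc n) M - (real (Suc n) * a)^M - (UU a n M - (real n * a)^M)\<bar>
      \<le> real M * B * (real n + 1)^m" for n
  proof -
    have "\<bar>UU a (Suc n) M - (real (Suc n) * a)^M - (UU a n M - (real n * a)^M)\<bar>
      \<le> (\<Sum>i\<le>Suc m. \<bar>real (M choose Suc i) * (ee a (Suc i) * UU a n (M - Suc i) - a^(Suc i) * (real n * a)^(M - Suc i))\<bar>)"
    proof -
      have eq: "UU a (Suc n) M - (real (Suc n) * a)^M - (UU a n M - (real n * a)^M) =
        (\<Sum>i\<le>Suc m. real (M choose Suc i) * (ee a (Suc i) * UU a n (M - Suc i) - a^(Suc i) * (real n * a)^(M - Suc i)))"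
        using D[of n] by linarith
      show ?thesis unfolding eq by (rule sum_abs)
    qed
    also have "\<dots> \<le> (\<Sum>i\<le>Suc m. B * (real n + 1)^m)"
      by (rule sum_mono) (use Dterm in auto)
    also have "\<dots> = real M * B * (real n + 1)^m" unfolding M_def by simp
    finally show ?thesis .
  qed
  have E: "\<bar>UU a n M - (real n * a)^M\<bar> \<le> real M * B * real n * (real n + 1)^m" for n
  proof (induction n)
    case 0
    then show ?case unfolding M_def by (simp add: uu_def)
  next
    case (Suc n)
    have "\<bar>UU a (Suc n) M - (real (Suc n) * a)^M\<bar> \<le> \<bar>UU a n M - (real n * a)^M\<bar> + real M * B * (real n + 1)^m"
      using Dbound[of n] by linarith
    also have "\<dots> \<le> real M * B * real n * (real n + 1)^m + real M * B * (real n + 1)^m"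
      using Suc.IH by linarith
    also have "\<dots> = real M * B * (real n + 1) * (real n + 1)^m" by (simp add: algebra_simps)
    also have "\<dots> \<le> real M * B * (real n + 1) * (real (Suc n) + 1)^m"
      using B0 by (intro mult_left_mono power_mono) auto
    finally show ?case by (simp add: add.commute)
  qed
  show ?case
  proof (intro exI[of _ "real M * B"] conjI allI)
    show "0 \<le> real M * B" using B0 by simp
    fix n
    have "\<bar>UU a n M - (real n * a)^M\<bar> \<le> real M * B * (real n * (real n + 1)^m)"
      using E[of n] by (simp add: algebra_simps)
    also have "\<dots> \<le> real M * B * ((real n + 1) * (real n + 1)^m)"
      using B0 by (intro mult_left_mono) auto
    finally show "\<bar>UU a n (Suc (Suc m)) - (real n * a)^(Suc (Suc m))\<bar> \<le> real M * B * (real n + 1)^(Suc m)"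
      unfolding M_def by simp
  qed
qed

definition Mom :: "real \<Rightarrow> nat \<Rightarrow> nat \<Rightarrow> real" where
  "Mom a n m = (\<Sum>j=0..n. Cco j n a * (1 - 2 * real j / real n)^m)"

lemma mom_eq:
  assumes "n > 0"
  shows "Mom a n m = UU a n m / real n ^ m"
proof -
  have "Cco j n a * (1 - 2 * real j / real n)^m =
     real (n choose j) * ((1 + a) / 2)^(n - j) * ((1 - a) / 2)^j * (real n - 2 * real j)^m / real n ^ m" for j
  proof -
    have "1 - 2 * real j / real n = (real n - 2 * real j) / real n" using assms by (simp add: field_simps)
    then show ?thesis unfolding Cco_def by (simp add: power_divide)
  qed
  then show ?thesis unfolding Mom_def uu_def sum_divide_distrib by simp
qed

lemma mom_bound:
  assumes a: "a > 1" and "n > 0"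
  shows "\<bar>Mom a n m\<bar> \<le> a^m"
proof -
  have "\<bar>Mom a n m\<bar> = \<bar>UU a n m\<bar> / real n ^ m" using mom_eq[OF assms(2)] by (simp add: abs_divide)
  also have "\<dots> \<le> (real n * a)^m / real n ^ m"
    using uu_bound[OF a] assms(2) by (intro divide_right_mono) auto
  also have "\<dots> = a^m" using assms(2) by (simp add: power_mult_distrib)
  finally show ?thesis .
qed

lemma mom_lim:
  assumes a: "a > 1"
  shows "(\<lambda>n. Mom a n m) \<longlonglongrightarrow> a^m"
proof (cases m)
  case 0
  have "eventually (\<lambda>n. 1 = Mom a n m) sequentially"
    using eventually_gt_at_top[of 0] by eventually_elim (simp add: mom_eq 0 uu0)
  then show ?thesis using 0 by (auto intro: Lim_transform_eventually)
next
  case (Suc m')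
  obtain K where K0: "K \<ge> 0" and K: "\<And>n. \<bar>UU a n (Suc m') - (real n * a)^(Suc m')\<bar> \<le> K * (real n + 1)^m'"
    using uu_err[OF a, of m'] by blast
  have "(\<lambda>n. (UU a n m - (real n * a)^m) / real n ^ m) \<longlonglongrightarrow> 0"
  proof (rule Lim_null_comparison)
    show "(\<lambda>n. K * 2^m' / real n) \<longlonglongrightarrow> 0" by (rule lim_const_over_n)
    show "eventually (\<lambda>n. norm ((UU a n m - (real n * a)^m) / real n ^ m) \<le> K * 2^m' / real n) sequentially"
      using eventually_gt_at_top[of 0]
    proof eventually_elim
      case (elim n)
      have "norm ((UU a n m - (real n * a)^m) / real n ^ m) \<le> K * (real n + 1)^m' / real n ^ m"
        unfolding Suc using K[of n] elim by (simp add: abs_divide divide_right_mono)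
      also have "\<dots> \<le> K * (2 * real n)^m' / real n ^ m"
        using elim K0 by (intro divide_right_mono mult_left_mono power_mono) auto
      also have "\<dots> = K * 2^m' / real n"
        unfolding Suc using elim by (simp add: power_mult_distrib field_simps)
      finally show ?case .
    qed
  qed
  then have "(\<lambda>n. a^m + (UU a n m - (real n * a)^m) / real n ^ m) \<longlonglongrightarrow> a^m + 0"
    by (intro tendsto_add tendsto_const)
  moreover have "eventually (\<lambda>n. a^m + (UU a n m - (real n * a)^m) / real n ^ m = Mom a n m) sequentially"
    using eventually_gt_at_top[of 0]
    by eventually_elim (simp add: mom_eq power_mult_distrib field_simps)
  ultimately show ?thesis by (auto intro: Lim_transform_eventually)
qed



definition GG :: "nat \<Rightarrow> complex \<Rightarrow> complex \<Rightarrow> complex" where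
  "GG k z w = ek k (z + \<i> * w / complex_of_real (sqrt 2)) *
     exp (z * (\<i> * w / complex_of_real (sqrt 2)) - w^2 / 4)"

lemma weyl_GG:
  "weyl (- (\<i> / complex_of_real (sqrt 2)) * complex_of_real t) (ek k) z = GG k z (complex_of_real t)"
proof -
  have c: "cnj (- (\<i> / complex_of_real (sqrt 2)) * complex_of_real t) = \<i> * complex_of_real t / complex_of_real (sqrt 2)"
    by simp
  have n: "(cmod (- (\<i> / complex_of_real (sqrt 2)) * complex_of_real t))^2 = t^2 / 2"
    by (simp add: norm_mult norm_divide power_divide power_mult_distrib)
  have e: "complex_of_real (t^2 / 2 / 2) = (complex_of_real t)^2 / 4" by simp
  show ?thesis unfolding weyl_def GG_def c n e by (simp add: algebra_simps)
qed

lemma GG_holo: "GG k z holomorphic_on UNIV"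
  unfolding GG_def ek_def by (intro holomorphic_intros) auto

theorem theorem3p24:
  fixes a :: real and k :: nat and z :: complex
  assumes "a > 1"
  shows "(\<lambda>n. \<Sum>j=0..n. complex_of_real (Cco j n a) * weyl (bj n j) (ek k) z)
           \<longlonglongrightarrow> weyl (bb a) (ek k) z"
proof -
  define G where "G = GG k z"
  define c where "c m = (deriv ^^ m) G 0 / fact m" for m
  have ser: "(\<lambda>m. c m * w^m) sums G w" for w
  proof -
    have "(\<lambda>m. (deriv ^^ m) G 0 / fact m * (w - 0)^m) sums G w"
      by (rule holomorphic_power_series[of G 0 "norm w + 1" w])
         (auto intro: holomorphic_on_subset[OF GG_holo] simp: G_def)
    then show ?thesis by (simp add: c_def)
  qed
  have sumc: "summable (\<lambda>m. norm (c m) * a^m)"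
  proof -
    have "summable (\<lambda>m. norm (c m * complex_of_real a ^ m))"
      by (rule powser_insidea[of c "complex_of_real (a + 1)"]) (use ser sums_summable assms in auto)
    then show ?thesis using assms by (simp add: norm_mult norm_power)
  qed
  define S where "S n = (\<Sum>j=0..n. complex_of_real (Cco j n a) * G (complex_of_real (1 - 2 * real j / real n)))" for n
  have Seq: "S n = (\<Sum>m. c m * complex_of_real (Mom a n m))" for n
  proof -
    have "(\<lambda>m. \<Sum>j=0..n. complex_of_real (Cco j n a) * (c m * complex_of_real (1 - 2 * real j / real n) ^ m)) sums S n"
      unfolding S_def by (intro sums_sum sums_mult ser)
    moreover have "(\<Sum>j=0..n. complex_of_real (Cco j n a) * (c m * complex_of_real (1 - 2 * real j / real n) ^ m))
        = c m * complex_of_real (Mom a n m)" for m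
      unfolding Mom_def of_real_sum sum_distrib_left by (rule sum.cong) (simp_all add: algebra_simps)
    ultimately show ?thesis by (simp add: sums_iff)
  qed
  have T: "(\<lambda>n. \<Sum>m. c m * complex_of_real (Mom a n m)) \<longlonglongrightarrow> (\<Sum>m. c m * complex_of_real (a^m))"
  proof -
    have "eventually (\<lambda>n. summable (\<lambda>m. norm (c m * complex_of_real (Mom a n m)))) sequentially \<and>
          summable (\<lambda>m. norm (c m * complex_of_real (a^m))) \<and>
          ((\<lambda>n. \<Sum>m. c m * complex_of_real (Mom a n m)) \<longlonglongrightarrow> (\<Sum>m. c m * complex_of_real (a^m)))"
    proof (rule tannerys_theorem[where M = "\<lambda>m. norm (c m) * a^m"])
      show "((\<lambda>n. c m * complex_of_real (Mom a n m)) \<longlonglongrightarrow> c m * complex_of_real (a^m))" for m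
        by (intro tendsto_mult tendsto_const tendsto_of_real mom_lim assms)
      show "eventually (\<lambda>(m, n). norm (c m * complex_of_real (Mom a n m)) \<le> norm (c m) * a^m) (at_top \<times>\<^sub>F sequentially)"
        unfolding eventually_prod_filter
      proof (intro exI conjI)
        show "eventually (\<lambda>m. True) at_top" by simp
        show "eventually (\<lambda>n. n > (0::nat)) sequentially" by (rule eventually_gt_at_top)
        show "\<forall>m n. True \<longrightarrow> n > 0 \<longrightarrow> (case (m, n) of (m, n) \<Rightarrow> norm (c m * complex_of_real (Mom a n m)) \<le> norm (c m) * a^m)"
          using mom_bound[OF assms] by (auto simp: norm_mult intro!: mult_left_mono)
      qed
    qed (use sumc in auto)
    then show ?thesis by blast
  qed
  have lim: "(\<Sum>m. c m * complex_of_real (a^m)) = weyl (bb a) (ek k) z"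
  proof -
    have eq: "bb a = - (\<i> / complex_of_real (sqrt 2)) * complex_of_real a" unfolding bb_def by simp
    have "weyl (bb a) (ek k) z = G (complex_of_real a)" unfolding eq G_def by (rule weyl_GG)
    then show ?thesis using ser[of "complex_of_real a"] by (simp add: sums_iff)
  qed
  have "(\<lambda>n. \<Sum>j=0..n. complex_of_real (Cco j n a) * weyl (bj n j) (ek k) z) = S"
    unfolding S_def bj_def G_def weyl_GG ..
  moreover have "S = (\<lambda>n. \<Sum>m. c m * complex_of_real (Mom a n m))" using Seq by (rule ext)
  ultimately show ?thesis using T lim by simp
qed


end
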